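(* Consider the fair-encoder optimization problem $$\sup_{\bm f_{Enc} \in \mathcal A_r} \Big\{(1-\lambda)\,\mathrm{Dep}\left(\bm f_{Enc}(\tilde{X};\bm{\Theta}_{Enc}), Y\right) -\lambda\, \mathrm{Dep}\left(\bm f_{Enc}(\tilde{X}_c;\bm{\Theta}_{Enc}), S_c\right)\Big\},\quad 0\le\lambda<1,$$ where the first and second terms are estimated empirically as $\frac{1}{n^2}\left\|\bm \Theta_{Enc} \bm K_{\tilde{X}} \bm H \bm L_{Y} \right\|^2_F$ and $\frac{1}{n^2}\left\|\bm \Theta_{Enc} \bm K_{\tilde{X}_c} \bm H \bm L_{S_c} \right\|^2_F$, respectively. A global optimizer of this problem is $$\bm f^{\text{opt}}_{\mathcal H_{\tilde{X}}}(\tilde{X}; \bm \Theta_{Enc}) = \bm \Theta^{\text{opt}}_{Enc} \left[k_{\tilde{X}}(\tilde{\bm{x}}_1, {\tilde{X}}),\cdots, k_{\tilde{X}}(\tilde{\bm{x}}_n, {\tilde{X}})\right]^T$$ where $\bm \Theta^{\text{opt}}_{Enc}=\bm U^T \bm L_{\tilde{X}}^\dagger\in \mathbb R^{r\times n}$ and the columns of $\bm U$ are eigenvectors corresponding to the $r$ largest eigenvalues of the generalized eigenvalue problem $$\left((1-\lambda) \bm L^T_{\tilde{X}} \bm H\bm K_Y\bm H \bm L_{\tilde{X}} -\lambda \bm L^T_{{\tilde{X}}_c} \bm H\bm K_{S_c}\bm H \bm L_{{\tilde{X}}_c} \right)\bm u = \lambda \left(\frac{1}{n}\,\bm L^T_{\tilde{X}}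 \bm H \bm L_{\tilde{X}} + \gamma \bm I\right) \bm u.$$ Here $\bm L_{\tilde{X}}\bm L_{\tilde{X}}^T=\bm K_{\tilde{X}}$, ${\tilde{X}}_c \sim p(\tilde{X}|Y=y)$ and $S_c \sim p(S|Y=y)$.
   Context: Setting: data $X$, target label $Y$, sensitive attribute $S$; $\tilde{X}=f(X;\bm{\Theta}_{FE})$ are features from a (frozen) feature extractor, with $n$ samples $\tilde{\bm x}_1,\dots,\tilde{\bm x}_n$. The fair encoder $\bm f_{Enc}=(f_1,\dots,f_r)$ has components in a universal RKHS $\mathcal H_{\tilde X}$ with kernel $k_{\tilde X}$ and Gram matrix $\bm K_{\tilde X}$, parametrized as $\bm f(\tilde X)=\bm\Theta_{Enc}[k_{\tilde X}(\tilde{\bm x}_1,\tilde X),\dots,k_{\tilde X}(\tilde{\bm x}_n,\tilde X)]^T$. The constraint set is $\mathcal A_r:=\{(f_1,\cdots, f_r) \mid f_i, f_j\in \mathcal H_{\tilde{X}},\, \mathrm{Cov} (f_i({\tilde{X}}), f_j({\tilde{X}}) )+\gamma\, \langle f_i, f_j\rangle_{\mathcal H_{\tilde{X}}}=\delta_{i,j}\}$ with $\gamma>0$. $\bm H = \bm I_n-\frac{1}{n} \bm 1_n \bm 1_n^T$ is the centering matrix; $\bm K_Y$, $\bm K_{S_c}$ are Gram matrices of (universal) kernels on $Y$ and on $S$ conditioned on $Y=y$, and $\bm L_Y$, $\bm L_{S_c}$ are full column-rank matrices with $\bm L_Y\bm L_Y^T=\bm K_Y$, $\bm L_{S_c}\bm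 L_{S_c}^T=\bm K_{S_c}$ (Cholesky factorization). $\dagger$ denotes the pseudo-inverse. The conditional dependence measure is $\mathrm{Dep}(\bm f(X), S|Y=y) := \sum_{j=1}^r \sum_{\beta_S \in \mathcal U_S } \mathbb{E}[(f_j(X_c)-\mathbb{E}f_j(X_c))(\beta_S(S_c)-\mathbb{E}\beta_S(S_c))]$ with $\mathcal U_S$ a countable orthonormal basis of a separable universal RKHS on $S$. *)

theory Defs
  imports "HOL-Analysis.Analysis"
begin

definition centering :: "real^'n^'n" where
  "centering = mat 1 - (\<chi> i j. 1 / real CARD('n))"

definition frob_sq :: "real^'b^'a \<Rightarrow> real" where
  "frob_sq A = (\<Sum>i\<in>UNIV. \<Sum>j\<in>UNIV. (A$i$j)^2)"

definition gram :: "('x \<Rightarrow> 'x \<Rightarrow> real) \<Rightarrow> ('n \<Rightarrow> 'x) \<Rightarrow> ('m \<Rightarrow> 'x) \<Rightarrow> real^'m^'n" where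
  "gram k xs zs = (\<chi> i j. k (xs i) (zs j))"

definition pinv :: "real^'b^'a \<Rightarrow> real^'a^'b" where
  "pinv A = (THE X. A ** X ** A = A \<and> X ** A ** X = X \<and>
                    transpose (A ** X) = A ** X \<and> transpose (X ** A) = X ** A)"

text \<open>Empirical covariance matrix of r functions, given the r x n matrix F of their
  values on the n samples: (1/n) F H F^T.\<close>
definition emp_cov :: "real^'n^'r \<Rightarrow> real^'r^'r" where
  "emp_cov F = (1 / real CARD('n)) *\<^sub>R (F ** centering ** transpose F)"

text \<open>Empirical version of the constraint set A_r for the encoder
  f(x) = Theta [k(x_1,x),...,k(x_n,x)]^T:  the values on the samples are Theta K,
  and <f_i,f_j>_H = (Theta K Theta^T)_{ij}.\<close>
definition fair_feasible :: "real \<Rightarrow> real^'n^'n \<Rightarrow> real^'n^'r \<Rightarrow> bool" where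
  "fair_feasible gam K Theta \<longleftrightarrow>
     emp_cov (Theta ** K) + gam *\<^sub>R (Theta ** K ** transpose Theta) = mat 1"

definition fair_objective ::
  "real \<Rightarrow> real^'n^'n \<Rightarrow> real^'m^'n \<Rightarrow> real^'p^'n \<Rightarrow> real^'q^'m \<Rightarrow> real^'n^'r \<Rightarrow> real" where
  "fair_objective lam K Kc LY LS Theta =
     (1 - lam) / (real CARD('n))^2 * frob_sq (Theta ** K ** centering ** LY)
     - lam / (real CARD('n))^2 * frob_sq (Theta ** Kc ** centering ** LS)"

definition fair_optimizer ::
  "real \<Rightarrow> real \<Rightarrow> real^'n^'n \<Rightarrow> real^'m^'n \<Rightarrow> real^'p^'n \<Rightarrow> real^'q^'m \<Rightarrow> real^'n^'r \<Rightarrow> bool" where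
  "fair_optimizer lam gam K Kc LY LS Theta \<longleftrightarrow>
     fair_feasible gam K Theta \<and>
     (\<forall>Theta' :: real^'n^'r. fair_feasible gam K Theta' \<longrightarrow>
        fair_objective lam K Kc LY LS Theta' \<le> fair_objective lam K Kc LY LS Theta)"

text \<open>The columns of U are (B-normalized, mutually B-orthogonal) eigenvectors of the
  generalized eigenproblem A u = tau B u, belonging to the r largest generalized
  eigenvalues (counted with multiplicity): every generalized eigenvector that is
  B-orthogonal to all columns of U has eigenvalue at most each tau_i.\<close>
definition top_gen_eigvecs :: "real^'d^'d \<Rightarrow> real^'d^'d \<Rightarrow> real^'r^'d \<Rightarrow> bool" where
  "top_gen_eigvecs A B U \<longleftrightarrow>
     (\<exists>tau :: 'r \<Rightarrow> real.
        (\<forall>i. A *v column i U = tau i *\<^sub>R (B *v column i U)) \<and>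
        transpose U ** B ** U = mat 1 \<and>
        (\<forall>w mu. w \<noteq> 0 \<and> A *v w = mu *\<^sub>R (B *v w) \<and> transpose U *v (B *v w) = 0
                 \<longrightarrow> (\<forall>i. mu \<le> tau i)))"

end

theory Submission
  imports Defs
begin


lemma quad_entry:
  fixes V :: "real^'r^'d" and B :: "real^'d^'d"
  shows "(transpose V ** B ** V)$i$j = column i V \<bullet> (B *v column j V)"
  unfolding matrix_mul_assoc[symmetric]
  by (simp add: matrix_matrix_mult_def transpose_def column_def inner_vec_def matrix_vector_mult_def)

lemma inner_mv_transpose:
  fixes A :: "real^'n^'m"
  shows "x \<bullet> (A *v y) = (transpose A *v x) \<bullet> y"
  by (simp add: dot_lmul_matrix)

lemma mm_diff_left: "((A::real^'n^'m) - B) ** (C::real^'p^'n) = A ** C - B ** C"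
  by (simp add: matrix_matrix_mult_def vec_eq_iff sum_subtractf left_diff_distrib)
lemma mm_add_left: "((A::real^'n^'m) + B) ** (C::real^'p^'n) = A ** C + B ** C"
  by (simp add: matrix_matrix_mult_def vec_eq_iff sum.distrib distrib_right)
lemma transpose_add: "transpose ((A::real^'n^'m) + B) = transpose A + transpose B"
  by (simp add: transpose_def vec_eq_iff)
lemma transpose_diff: "transpose ((A::real^'n^'m) - B) = transpose A - transpose B"
  by (simp add: transpose_def vec_eq_iff)

lemma centering_sym: "transpose (centering::real^'n::finite^'n) = centering"
  by (simp add: centering_def transpose_def vec_eq_iff mat_def)

lemma centering_mv: "(centering::real^'n::finite^'n) *v y = y - ((\<Sum>i\<in>UNIV. y$i) / real CARD('n)) *\<^sub>R (\<chi> i. 1)"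
  unfolding centering_def matrix_vector_mult_diff_rdistrib matrix_vector_mul_lid
  by (simp add: vec_eq_iff matrix_vector_mult_def sum_divide_distrib)

lemma centering_psd: "y \<bullet> ((centering::real^'n::finite^'n) *v y) \<ge> 0"
proof -
  define c where "c = (\<Sum>i\<in>UNIV. y$i) / real CARD('n)"
  define one where "one = ((\<chi> i. 1)::real^'n)"
  define z where "z = centering *v y"
  have yz: "y = z + c *\<^sub>R one" unfolding z_def c_def one_def centering_mv by simp
  have "one \<bullet> z = 0"
    unfolding z_def one_def by (simp add: centering_mv inner_diff_right inner_vec_def sum_subtractf)
  moreover have "y \<bullet> z = z \<bullet> z + c * (one \<bullet> z)"
    by (subst yz) (simp add: inner_add_left)
  ultimately have "y \<bullet> z = z \<bullet> z" by simp
  then show ?thesis unfolding z_def by simp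
qed

lemma mv_lincomb:
  fixes M :: "real^'d^'d"
  shows "x \<bullet> (M *v (\<Sum>k\<in>S. c k *\<^sub>R e k)) = (\<Sum>k\<in>S. c k * (x \<bullet> (M *v e k)))"
  by (induct S rule: infinite_finite_induct)
     (simp_all add: matrix_vector_right_distrib inner_add_right matrix_vector_mult_scaleR)

lemma lincomb_inner:
  shows "(\<Sum>k\<in>S. c k *\<^sub>R e k) \<bullet> (y::real^'d) = (\<Sum>k\<in>S. c k * (e k \<bullet> y))"
  by (simp add: inner_sum_left)

lemma sum_delta_mult:
  "(\<Sum>j\<in>(UNIV::'a::finite set). c j * (if l = j then 1 else 0)) = (c l::real)"
proof -
  have "(\<Sum>j\<in>UNIV. c j * (if l = j then 1 else 0)) = (\<Sum>j\<in>UNIV. if l = j then c j else 0)"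
    by (rule sum.cong) auto
  then show ?thesis by simp
qed

lemma qscale:
  fixes M :: "real^'d^'d"
  shows "((c::real) *\<^sub>R x) \<bullet> (M *v (c *\<^sub>R x)) = c^2 * (x \<bullet> (M *v x))"
  by (simp add: matrix_vector_mult_scaleR power2_eq_square)

lemma quad_zero:
  fixes g c :: real
  assumes "\<And>t. 2*t*g + t^2*c \<le> 0"
  shows "g = 0"
proof -
  define e where "e = \<bar>c\<bar> + 1"
  have e: "e > 0" "2*e + c \<ge> 2" unfolding e_def by auto
  have "2*(g/e)*g + (g/e)^2*c \<le> 0" using assms by blast
  then have "(2*(g/e)*g + (g/e)^2*c) * e^2 \<le> 0" using e
    by (simp add: mult_nonpos_nonneg)
  moreover have "(2*(g/e)*g + (g/e)^2*c) * e^2 = g*g*(2*e + c)" using e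
    by (simp add: field_simps power2_eq_square)
  ultimately have "g*g*(2*e+c) \<le> 0" by simp
  moreover have "g*g \<ge> 0" by simp
  ultimately have "g*g \<le> 0" using e
    by (smt (verit) mult_le_cancel_left1 mult_nonneg_nonneg)
  then have "g*g = 0" by (metis antisym zero_le_square)
  then show ?thesis by simp
qed



locale gep =
  fixes A B :: "real^'d::finite^'d" and U :: "real^'r::finite^'d" and tau :: "'r \<Rightarrow> real"
    and gam :: real
  assumes symA: "transpose A = A" and symB: "transpose B = B"
    and posB: "\<And>w. gam * (w \<bullet> w) \<le> w \<bullet> (B *v w)" and gam: "gam > 0"
    and eig: "\<And>i. A *v column i U = tau i *\<^sub>R (B *v column i U)"
    and UBU: "transpose U ** B ** U = mat 1"
    and top: "\<And>w mu i. w \<noteq> 0 \<Longrightarrow> A *v w = mu *\<^sub>R (B *v w) \<Longrightarrow> transpose U *v (B *v w) = 0 \<Longrightarrow> mu \<le> tau i"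
begin

lemma Bsym: "x \<bullet> (B *v y) = y \<bullet> (B *v x)"
  by (metis inner_mv_transpose symB inner_commute)

lemma Asym: "x \<bullet> (A *v y) = y \<bullet> (A *v x)"
  by (metis inner_mv_transpose symA inner_commute)

lemma Bpos: "x \<noteq> 0 \<Longrightarrow> x \<bullet> (B *v x) > 0"
  using posB[of x] gam by (smt (verit) inner_gt_zero_iff mult_pos_pos)

lemma Bnn: "x \<bullet> (B *v x) \<ge> 0"
  using Bpos[of x] by (cases "x = 0") auto

lemma Uorth: "column i U \<bullet> (B *v column k U) = (if i = k then 1 else 0)"
  using quad_entry[of U B i k] UBU by (simp add: mat_def)

lemma Ucomp: "transpose U *v x = 0 \<longleftrightarrow> (\<forall>i. column i U \<bullet> x = 0)"
  by (simp add: vec_eq_iff vector_matrix_mult_def column_def inner_vec_def mult.commute)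

lemma uA: "column i U \<bullet> (A *v w) = tau i * (column i U \<bullet> (B *v w))"
proof -
  have "column i U \<bullet> (A *v w) = (A *v column i U) \<bullet> w"
    by (metis inner_mv_transpose symA)
  also have "\<dots> = tau i * ((B *v column i U) \<bullet> w)" by (simp add: eig)
  also have "(B *v column i U) \<bullet> w = column i U \<bullet> (B *v w)"
    by (metis inner_mv_transpose symB)
  finally show ?thesis .
qed

lemma Binv: "\<exists>Bi. B ** Bi = mat 1"
proof -
  have "\<forall>x. B *v x = 0 \<longrightarrow> x = 0" using Bpos by fastforce
  then obtain Bi where "Bi ** B = mat 1" using matrix_left_invertible_ker by blast
  then show ?thesis using matrix_left_right_inverse by blast
qed

end


context gep begin

lemma normalize:
  assumes C: "\<forall>i. column i U \<bullet> (B *v x) = 0" and x: "x \<noteq> 0"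
  defines "y \<equiv> (1 / sqrt (x \<bullet> (B *v x))) *\<^sub>R x"
  shows "(\<forall>i. column i U \<bullet> (B *v y) = 0) \<and> y \<bullet> (B *v y) = 1
         \<and> y \<bullet> (A *v y) = (x \<bullet> (A *v x)) / (x \<bullet> (B *v x))"
proof -
  have s: "x \<bullet> (B *v x) > 0" using Bpos x by blast
  have sq: "(1 / sqrt (x \<bullet> (B *v x)))^2 = 1 / (x \<bullet> (B *v x))"
    using s by (simp add: power_divide)
  show ?thesis
    unfolding y_def qscale sq using s C
    by (simp add: matrix_vector_mult_scaleR)
qed

lemma rayleigh:
  assumes C: "\<forall>i. column i U \<bullet> (B *v w) = 0"
  shows "w \<bullet> (A *v w) \<le> tau i * (w \<bullet> (B *v w))"
proof (cases "w = 0")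
  case True then show ?thesis by simp
next
  case False
  let ?C = "{w. \<forall>i. column i U \<bullet> (B *v w) = 0}"
  let ?S = "{w. (\<forall>i. column i U \<bullet> (B *v w) = 0) \<and> w \<bullet> (B *v w) = 1}"
  have ne: "?S \<noteq> {}" using normalize[OF C False] by blast
  have cl: "closed ?S"
    by (intro closed_Collect_conj closed_Collect_all closed_Collect_eq continuous_intros)
  have bd: "bounded ?S"
    unfolding bounded_iff
  proof (intro exI ballI)
    fix x assume "x \<in> ?S"
    then have "gam * (x \<bullet> x) \<le> 1" using posB[of x] by simp
    then have "norm x ^ 2 \<le> 1 / gam" using gam by (simp add: power2_norm_eq_inner field_simps)
    moreover have "norm x \<le> 1 + norm x ^ 2"
    proof -
      have "0 \<le> (norm x - 1)^2" by simp
      moreover have "(norm x - 1)^2 = norm x^2 - 2*norm x + 1" by (simp add: power2_eq_square algebra_simps)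
      ultimately show ?thesis using norm_ge_zero[of x] by linarith
    qed
    ultimately show "norm x \<le> 1 + 1 / gam" by simp
  qed
  have "compact ?S" using cl bd compact_eq_bounded_closed by blast
  moreover have cont: "continuous_on ?S (\<lambda>y. y \<bullet> (A *v y))" by (intro continuous_intros)
  ultimately obtain w0 where w0: "w0 \<in> ?S" and mx: "\<And>y. y \<in> ?S \<Longrightarrow> y \<bullet> (A *v y) \<le> w0 \<bullet> (A *v w0)"
    using continuous_attains_sup[OF _ ne cont] by blast
  define m where "m = w0 \<bullet> (A *v w0)"
  have bound: "x \<bullet> (A *v x) \<le> m * (x \<bullet> (B *v x))" if xC: "\<forall>i. column i U \<bullet> (B *v x) = 0" for x
  proof (cases "x = 0")
    case True then show ?thesis by simp
  next
    case False
    have s: "x \<bullet> (B *v x) > 0" using Bpos False by blast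
    from normalize[OF xC False] mx[of "(1 / sqrt (x \<bullet> (B *v x))) *\<^sub>R x"]
    have "(x \<bullet> (A *v x)) / (x \<bullet> (B *v x)) \<le> m" unfolding m_def by auto
    then show ?thesis using s by (simp add: field_simps)
  qed
  define z where "z = A *v w0 - m *\<^sub>R (B *v w0)"
  have w0C: "\<forall>i. column i U \<bullet> (B *v w0) = 0" and w01: "w0 \<bullet> (B *v w0) = 1" using w0 by auto
  have gz: "h \<bullet> z = 0" if hC: "\<forall>i. column i U \<bullet> (B *v h) = 0" for h
  proof -
    have "2*t*(h \<bullet> z) + t^2 * (h \<bullet> (A *v h) - m * (h \<bullet> (B *v h))) \<le> 0" for t
    proof -
      have xC: "\<forall>i. column i U \<bullet> (B *v (w0 + t *\<^sub>R h)) = 0"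
        using w0C hC by (simp add: matrix_vector_right_distrib matrix_vector_mult_scaleR inner_add_right)
      have eA: "(w0 + t *\<^sub>R h) \<bullet> (A *v (w0 + t *\<^sub>R h)) = m + 2*t*(h \<bullet> (A *v w0)) + t^2 * (h \<bullet> (A *v h))"
        unfolding m_def
        by (simp add: matrix_vector_right_distrib matrix_vector_mult_scaleR inner_add_right inner_add_left
            Asym[of w0 h] power2_eq_square algebra_simps)
      have eB: "(w0 + t *\<^sub>R h) \<bullet> (B *v (w0 + t *\<^sub>R h)) = 1 + 2*t*(h \<bullet> (B *v w0)) + t^2 * (h \<bullet> (B *v h))"
        using w01
        by (simp add: matrix_vector_right_distrib matrix_vector_mult_scaleR inner_add_right inner_add_left
            Bsym[of w0 h] power2_eq_square algebra_simps)
      have hz: "h \<bullet> z = h \<bullet> (A *v w0) - m * (h \<bullet> (B *v w0))"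
        unfolding z_def by (simp add: inner_diff_right)
      have "m + 2*t*(h \<bullet> (A *v w0)) + t^2 * (h \<bullet> (A *v h)) \<le> m * (1 + 2*t*(h \<bullet> (B *v w0)) + t^2 * (h \<bullet> (B *v h)))"
        using bound[OF xC] unfolding eA eB .
      moreover have "m * (1 + 2*t*(h \<bullet> (B *v w0)) + t^2 * (h \<bullet> (B *v h))) = m + 2*t*(m*(h \<bullet> (B *v w0))) + t^2*(m*(h \<bullet> (B *v h)))"
        by (simp add: algebra_simps)
      moreover have "2*t*(h \<bullet> z) + t^2 * (h \<bullet> (A *v h) - m * (h \<bullet> (B *v h))) = 2*t*(h \<bullet> (A *v w0)) - 2*t*(m*(h \<bullet> (B *v w0))) + t^2 * (h \<bullet> (A *v h)) - t^2*(m*(h \<bullet> (B *v h)))"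
        unfolding hz by (simp add: algebra_simps)
      ultimately show ?thesis by linarith
    qed
    then show ?thesis using quad_zero by blast
  qed
  obtain Bi where Bi: "B ** Bi = mat 1" using Binv by blast
  define h where "h = Bi *v z"
  have Bh: "B *v h = z" unfolding h_def by (simp add: matrix_vector_mul_assoc Bi)
  have "column i U \<bullet> z = 0" for i
    unfolding z_def using w0C by (simp add: inner_diff_right uA)
  then have "h \<bullet> z = 0" using gz Bh by simp
  then have "h = 0" using Bpos Bh by fastforce
  then have z0: "z = 0" using Bh by simp
  have "m \<le> tau i"
  proof (rule top)
    show "w0 \<noteq> 0" using w01 by auto
    show "A *v w0 = m *\<^sub>R (B *v w0)" using z0 unfolding z_def by simp
    show "transpose U *v (B *v w0) = 0" using w0C Ucomp by blast
  qed
  moreover have "w \<bullet> (B *v w) \<ge> 0" by (rule Bnn)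
  ultimately have "m * (w \<bullet> (B *v w)) \<le> tau i * (w \<bullet> (B *v w))" by (rule mult_right_mono)
  with bound[OF C] show ?thesis by linarith
qed

end


context gep begin

lemma kyfan:
  fixes V :: "real^'r^'d"
  assumes VBV: "transpose V ** B ** V = mat 1"
  shows "(\<Sum>j\<in>UNIV. column j V \<bullet> (A *v column j V)) \<le> (\<Sum>j\<in>UNIV. column j U \<bullet> (A *v column j U))"
proof -
  have Vorth: "column j V \<bullet> (B *v column l V) = (if j = l then 1 else 0)" for j l
    using quad_entry[of V B j l] VBV by (simp add: mat_def)
  have "Min (range tau) \<in> range tau" by (rule Min_in) auto
  then obtain i0 where "tau i0 = Min (range tau)" by (metis rangeE)
  then have i0: "tau i0 \<le> tau i" for i by (simp add: Min_le)
  define t where "t = tau i0"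
  define a where "a i j = column i U \<bullet> (B *v column j V)" for i j
  have RHS: "(\<Sum>j\<in>UNIV. column j U \<bullet> (A *v column j U)) = (\<Sum>i\<in>UNIV. tau i)"
    by (simp add: uA Uorth)
  have bessel: "(\<Sum>j\<in>UNIV. (a i j)^2) \<le> 1" for i
  proof -
    let ?u = "column i U"
    define s where "s = (\<Sum>j\<in>UNIV. a i j *\<^sub>R column j V)"
    have sv: "column l V \<bullet> (B *v s) = a i l" for l
      unfolding s_def mv_lincomb Vorth by (simp add: sum_delta_mult)
    have su: "s \<bullet> (B *v ?u) = (\<Sum>j\<in>UNIV. (a i j)^2)"
      unfolding s_def lincomb_inner by (simp add: a_def Bsym[of _ ?u] power2_eq_square)
    have ss: "s \<bullet> (B *v s) = (\<Sum>j\<in>UNIV. (a i j)^2)"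
      unfolding s_def[of ] lincomb_inner by (simp add: sv[unfolded s_def] power2_eq_square)
    have "0 \<le> (?u - s) \<bullet> (B *v (?u - s))" by (rule Bnn)
    also have "\<dots> = ?u \<bullet> (B *v ?u) - 2 * (s \<bullet> (B *v ?u)) + s \<bullet> (B *v s)"
      by (simp add: matrix_vector_mult_diff_distrib inner_diff_left inner_diff_right Bsym[of ?u s])
    also have "\<dots> = 1 - (\<Sum>j\<in>UNIV. (a i j)^2)" using Uorth[of i i] su ss by simp
    finally show ?thesis by simp
  qed
  have perj: "column j V \<bullet> (A *v column j V) \<le> t + (\<Sum>i\<in>UNIV. (tau i - t) * (a i j)^2)" for j
  proof -
    let ?v = "column j V"
    define p where "p = (\<Sum>i\<in>UNIV. a i j *\<^sub>R column i U)"
    define w where "w = ?v - p"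
    have pinner: "p \<bullet> x = (\<Sum>i\<in>UNIV. a i j * (column i U \<bullet> x))" for x
      unfolding p_def lincomb_inner by simp
    have up: "column k U \<bullet> (B *v p) = a k j" for k
      unfolding p_def mv_lincomb Uorth by (simp add: sum_delta_mult)
    have wC: "\<forall>k. column k U \<bullet> (B *v w) = 0"
      unfolding w_def by (simp add: matrix_vector_mult_diff_distrib inner_diff_right up a_def)
    have pAw: "p \<bullet> (A *v w) = 0" unfolding pinner using wC by (simp add: uA)
    have pBw: "p \<bullet> (B *v w) = 0" unfolding pinner using wC by simp
    have pAp: "p \<bullet> (A *v p) = (\<Sum>i\<in>UNIV. tau i * (a i j)^2)"
      unfolding pinner[of "A *v p"] by (simp add: uA up power2_eq_square mult_ac)
    have pBp: "p \<bullet> (B *v p) = (\<Sum>i\<in>UNIV. (a i j)^2)"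
      unfolding pinner[of "B *v p"] by (simp add: up power2_eq_square)
    have vv: "?v = p + w" unfolding w_def by simp
    have qv: "?v \<bullet> (A *v ?v) = p \<bullet> (A *v p) + 2 * (p \<bullet> (A *v w)) + w \<bullet> (A *v w)"
      by (subst vv, subst vv) (simp add: matrix_vector_right_distrib inner_add_left inner_add_right Asym[of w p])
    have bv: "?v \<bullet> (B *v ?v) = p \<bullet> (B *v p) + 2 * (p \<bullet> (B *v w)) + w \<bullet> (B *v w)"
      by (subst vv, subst vv) (simp add: matrix_vector_right_distrib inner_add_left inner_add_right Bsym[of w p])
    have v1: "?v \<bullet> (B *v ?v) = 1" using Vorth[of j j] by simp
    have ray: "w \<bullet> (A *v w) \<le> t * (w \<bullet> (B *v w))" unfolding t_def by (rule rayleigh[OF wC])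
    have "(\<Sum>i\<in>UNIV. (tau i - t) * (a i j)^2) = (\<Sum>i\<in>UNIV. tau i * (a i j)^2) - t * (\<Sum>i\<in>UNIV. (a i j)^2)"
      by (simp add: left_diff_distrib sum_subtractf sum_distrib_left)
    moreover have wB: "w \<bullet> (B *v w) = 1 - (\<Sum>i\<in>UNIV. (a i j)^2)" using bv v1 pBp pBw by simp
    moreover have "?v \<bullet> (A *v ?v) = (\<Sum>i\<in>UNIV. tau i * (a i j)^2) + w \<bullet> (A *v w)" using qv pAp pAw by simp
    moreover have "t * (w \<bullet> (B *v w)) = t - t * (\<Sum>i\<in>UNIV. (a i j)^2)" unfolding wB by (simp add: right_diff_distrib)
    ultimately show ?thesis using ray by linarith
  qed
  have "(\<Sum>j\<in>UNIV. column j V \<bullet> (A *v column j V)) \<le> (\<Sum>j\<in>UNIV. t + (\<Sum>i\<in>UNIV. (tau i - t) * (a i j)^2))"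
    by (rule sum_mono) (rule perj)
  also have "\<dots> = (\<Sum>i\<in>(UNIV::'r set). t) + (\<Sum>i\<in>UNIV. (tau i - t) * (\<Sum>j\<in>UNIV. (a i j)^2))"
  proof -
    have "(\<Sum>j\<in>UNIV. \<Sum>i\<in>UNIV. (tau i - t) * (a i j)^2) = (\<Sum>i\<in>UNIV. \<Sum>j\<in>UNIV. (tau i - t) * (a i j)^2)"
      by (rule sum.swap)
    then show ?thesis by (simp add: sum.distrib sum_distrib_left)
  qed
  also have "\<dots> \<le> (\<Sum>i\<in>(UNIV::'r set). t) + (\<Sum>i\<in>UNIV. (tau i - t))"
  proof -
    have "(tau i - t) * (\<Sum>j\<in>UNIV. (a i j)^2) \<le> tau i - t" for i
      using bessel[of i] i0[of i] unfolding t_def by (simp add: mult_left_le)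
    then show ?thesis by (simp add: sum_mono)
  qed
  also have "\<dots> = (\<Sum>i\<in>UNIV. tau i)" by (simp add: sum_subtractf)
  finally show ?thesis using RHS by simp
qed

end


lemma pinv_left:
  fixes L :: "real^'d::finite^'n::finite"
  assumes "rank L = CARD('d)"
  shows "pinv L ** L = mat 1"
proof -
  have inj: "inj ((*v) L)" using assms full_rank_injective by blast
  let ?G = "transpose L ** L"
  have "?G *v x = 0 \<Longrightarrow> x = 0" for x
  proof -
    assume "?G *v x = 0"
    then have "x \<bullet> (transpose L *v (L *v x)) = 0" by (simp add: matrix_vector_mul_assoc)
    then have "(L *v x) \<bullet> (L *v x) = 0" using inner_mv_transpose[of x "transpose L" "L *v x"] by simp
    then have "L *v x = L *v 0" by simp
    then show "x = 0" using inj by (meson injD)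
  qed
  then obtain Gi where Gi: "Gi ** ?G = mat 1" using matrix_left_invertible_ker by blast
  then have GGi: "?G ** Gi = mat 1" using matrix_left_right_inverse by blast
  have Gsym: "transpose ?G = ?G" by (simp add: matrix_transpose_mul)
  have "transpose Gi ** ?G = mat 1"
    using arg_cong[OF GGi, of transpose] by (simp add: matrix_transpose_mul)
  then have Gis: "transpose Gi = Gi"
    by (metis GGi matrix_mul_assoc matrix_mul_lid matrix_mul_rid)
  define X where "X = Gi ** transpose L"
  have XL: "X ** L = mat 1" unfolding X_def using Gi by (simp add: matrix_mul_assoc)
  have LXs: "transpose (L ** X) = L ** X"
    unfolding X_def by (simp add: matrix_transpose_mul Gis matrix_mul_assoc)
  have PX: "L ** X ** L = L \<and> X ** L ** X = X \<and> transpose (L ** X) = L ** X \<and> transpose (X ** L) = X ** L"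
    using XL LXs by (simp add: matrix_mul_assoc[symmetric])
  have uniq: "Y = X" if PY: "L ** Y ** L = L \<and> Y ** L ** Y = Y \<and> transpose (L ** Y) = L ** Y \<and> transpose (Y ** L) = Y ** L" for Y
  proof -
    have YL: "Y ** L = mat 1"
    proof -
      have "X ** (L ** Y ** L) = X ** L" using PY by simp
      then show ?thesis using XL by (simp add: matrix_mul_assoc)
    qed
    have "L ** Y = (L ** X ** L) ** Y" using PX by simp
    also have "\<dots> = (L ** X) ** (L ** Y)" by (simp add: matrix_mul_assoc)
    also have "\<dots> = transpose (L ** X) ** transpose (L ** Y)" using PY LXs by simp
    also have "\<dots> = transpose (L ** Y ** L ** X)" by (simp add: matrix_transpose_mul matrix_mul_assoc)
    also have "\<dots> = transpose (L ** X)" using PY by simp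
    also have "\<dots> = L ** X" using LXs by simp
    finally have LY: "L ** Y = L ** X" .
    have "Y = Y ** L ** Y" using PY by simp
    also have "\<dots> = Y ** (L ** X)" using LY by (simp add: matrix_mul_assoc[symmetric])
    also have "\<dots> = X" using YL by (simp add: matrix_mul_assoc)
    finally show ?thesis .
  qed
  have "pinv L = X" unfolding pinv_def
    by (rule the_equality) (use PX uniq in blast)+
  then show ?thesis using XL by simp
qed

lemma frob_e: fixes W :: "real^'d::finite^'r::finite" and M :: "real^'p::finite^'d"
  shows "(W ** M)$j$l = (transpose M *v row j W)$l"
    unfolding matrix_matrix_mult_def matrix_vector_mult_def transpose_def row_def
    by (simp add: mult.commute)
lemma frob_q: fixes W :: "real^'d::finite^'r::finite" and M :: "real^'p::finite^'d"
  shows "row j W \<bullet> ((M ** transpose M) *v row j W) = (transpose M *v row j W) \<bullet> (transpose M *v row j W)"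
  proof -
    have "row j W \<bullet> ((M ** transpose M) *v row j W) = row j W \<bullet> (M *v (transpose M *v row j W))"
      by (simp only: matrix_vector_mul_assoc)
    also have "\<dots> = (transpose M *v row j W) \<bullet> (transpose M *v row j W)"
      by (rule inner_mv_transpose)
    finally show ?thesis .
  qed
lemma frob_row:
  fixes W :: "real^'d::finite^'r::finite" and M :: "real^'p::finite^'d"
  shows "frob_sq (W ** M) = (\<Sum>j\<in>UNIV. row j W \<bullet> ((M ** transpose M) *v row j W))"
  unfolding frob_sq_def frob_e frob_q by (simp only: inner_vec_def inner_real_def power2_eq_square)


lemma red_feas:
  fixes LX :: "real^'d::finite^'n::finite" and Th :: "real^'n^'r::finite"
  assumes K: "LX ** transpose LX = K"
  shows "emp_cov (Th ** K) + gam *\<^sub>R (Th ** K ** transpose Th)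
    = (Th ** LX) ** ((1 / real CARD('n)) *\<^sub>R (transpose LX ** centering ** LX) + gam *\<^sub>R mat 1) ** transpose (Th ** LX)"
proof -
  have TK: "Th ** K = (Th ** LX) ** transpose LX" unfolding K[symmetric] by (simp add: matrix_mul_assoc)
  have e1: "emp_cov (Th ** K) = (1 / real CARD('n)) *\<^sub>R ((Th ** LX) ** (transpose LX ** centering ** LX) ** transpose (Th ** LX))"
    unfolding emp_cov_def TK by (simp add: matrix_transpose_mul matrix_mul_assoc)
  have e2: "Th ** K ** transpose Th = (Th ** LX) ** transpose (Th ** LX)"
    unfolding TK by (simp add: matrix_transpose_mul matrix_mul_assoc)
  show ?thesis unfolding e1 e2
    by (simp add: matrix_add_ldistrib mm_add_left matrix_scalar_ac scalar_matrix_assoc[symmetric])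
qed

lemma sym_chain:
  fixes L :: "real^'d::finite^'n::finite" and K :: "real^'n^'n"
  assumes "transpose K = K"
  shows "transpose (transpose L ** centering ** K ** centering ** L) = transpose L ** centering ** K ** centering ** L"
  using assms by (simp add: matrix_transpose_mul centering_sym matrix_mul_assoc)

lemma red_obj:
  fixes LX :: "real^'d::finite^'n::finite" and LXc :: "real^'d^'m::finite"
    and LY :: "real^'p::finite^'n" and LS :: "real^'q::finite^'m" and Th :: "real^'n^'r::finite"
  assumes K: "LX ** transpose LX = K" and Kc: "LX ** transpose LXc = Kc"
    and KY: "LY ** transpose LY = KY" and KS: "LS ** transpose LS = KS"
  shows "fair_objective lam K Kc LY LS Th = 1 / (real CARD('n))^2 *
     (\<Sum>j\<in>UNIV. row j (Th ** LX) \<bullet> (((1 - lam) *\<^sub>R (transpose LX ** centering ** KY ** centering ** LX)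
              - lam *\<^sub>R (transpose LXc ** centering ** KS ** centering ** LXc)) *v row j (Th ** LX)))"
proof -
  let ?A1 = "transpose LX ** centering ** KY ** centering ** LX"
  let ?A2 = "transpose LXc ** centering ** KS ** centering ** LXc"
  have 1: "Th ** K ** centering ** LY = (Th ** LX) ** (transpose LX ** centering ** LY)"
    unfolding K[symmetric] by (simp add: matrix_mul_assoc)
  have 2: "Th ** Kc ** centering ** LS = (Th ** LX) ** (transpose LXc ** centering ** LS)"
    unfolding Kc[symmetric] by (simp add: matrix_mul_assoc)
  have 3: "(transpose LX ** centering ** LY) ** transpose (transpose LX ** centering ** LY) = ?A1"
    unfolding KY[symmetric] by (simp add: matrix_transpose_mul centering_sym matrix_mul_assoc)
  have 4: "(transpose LXc ** centering ** LS) ** transpose (transpose LXc ** centering ** LS) = ?A2"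
    unfolding KS[symmetric] by (simp add: matrix_transpose_mul centering_sym matrix_mul_assoc)
  have 5: "x \<bullet> (((1 - lam) *\<^sub>R ?A1 - lam *\<^sub>R ?A2) *v x) = (1 - lam) * (x \<bullet> (?A1 *v x)) - lam * (x \<bullet> (?A2 *v x))" for x
    by (simp add: matrix_vector_mult_diff_rdistrib scaleR_matrix_vector_assoc[symmetric] inner_diff_right)
  have 6: "(1 - lam) / N * SA - lam / N * SB = 1 / N * ((1 - lam) * SA - lam * SB)" for N SA SB :: real
    by (simp add: right_diff_distrib)
  show ?thesis
    unfolding fair_objective_def 1 2 frob_row 3 4 5 sum_subtractf sum_distrib_left[symmetric] 6 ..
qed



theorem theorem1:
  fixes k :: "'x \<Rightarrow> 'x \<Rightarrow> real"
    and xs :: "'n::finite \<Rightarrow> 'x" and xcs :: "'m::finite \<Rightarrow> 'x"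
    and kY :: "'y \<Rightarrow> 'y \<Rightarrow> real" and ys :: "'n \<Rightarrow> 'y"
    and kS :: "'s \<Rightarrow> 's \<Rightarrow> real" and scs :: "'m \<Rightarrow> 's"
    and LX :: "real^'d::finite^'n" and LXc :: "real^'d^'m"
    and LY :: "real^'p::finite^'n" and LS :: "real^'q::finite^'m"
    and U :: "real^'r::finite^'d"
    and lam gam :: real
  assumes "0 \<le> lam" and "lam < 1" and "gam > 0"
    and "LX ** transpose LX = gram k xs xs" and "rank LX = CARD('d)"
    and "LX ** transpose LXc = gram k xs xcs"
    and "LY ** transpose LY = gram kY ys ys" and "rank LY = CARD('p)"
    and "LS ** transpose LS = gram kS scs scs" and "rank LS = CARD('q)"
    and "top_gen_eigvecs
           ((1 - lam) *\<^sub>R (transpose LX ** centering ** gram kY ys ys ** centering ** LX)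
              - lam *\<^sub>R (transpose LXc ** centering ** gram kS scs scs ** centering ** LXc))
           ((1 / real CARD('n)) *\<^sub>R (transpose LX ** centering ** LX) + gam *\<^sub>R mat 1)
           U"
  shows "fair_optimizer lam gam (gram k xs xs) (gram k xs xcs) LY LS (transpose U ** pinv LX)"
proof -
  let ?Am = "(1 - lam) *\<^sub>R (transpose LX ** centering ** gram kY ys ys ** centering ** LX)
              - lam *\<^sub>R (transpose LXc ** centering ** gram kS scs scs ** centering ** LXc)"
  let ?Bm = "(1 / real CARD('n)) *\<^sub>R (transpose LX ** centering ** LX) + gam *\<^sub>R (mat 1 :: real^'d^'d)"
  obtain tau where eig: "\<And>i. ?Am *v column i U = tau i *\<^sub>R (?Bm *v column i U)"
    and UBU: "transpose U ** ?Bm ** U = mat 1"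
    and top: "\<And>w mu. w \<noteq> 0 \<and> ?Am *v w = mu *\<^sub>R (?Bm *v w) \<and> transpose U *v (?Bm *v w) = 0
                 \<longrightarrow> (\<forall>i. mu \<le> tau i)"
    using assms(11) unfolding top_gen_eigvecs_def by blast
  have KYs: "transpose (gram kY ys ys) = gram kY ys ys"
    using assms(7) by (metis matrix_transpose_mul transpose_transpose)
  have KSs: "transpose (gram kS scs scs) = gram kS scs scs"
    using assms(9) by (metis matrix_transpose_mul transpose_transpose)
  have symA: "transpose ?Am = ?Am"
    by (simp add: transpose_diff transpose_scalar sym_chain[OF KYs] sym_chain[OF KSs])
  have symB: "transpose ?Bm = ?Bm"
    by (simp add: transpose_add transpose_scalar matrix_transpose_mul centering_sym matrix_mul_assoc)
  have posB: "gam * (w \<bullet> w) \<le> w \<bullet> (?Bm *v w)" for w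
  proof -
    have "w \<bullet> ((transpose LX ** centering ** LX) *v w) = w \<bullet> (transpose LX *v (centering *v (LX *v w)))"
      by (simp only: matrix_vector_mul_assoc matrix_mul_assoc)
    also have "\<dots> = (LX *v w) \<bullet> (centering *v (LX *v w))"
      using inner_mv_transpose[of w "transpose LX" "centering *v (LX *v w)"] by (simp only: transpose_transpose)
    finally have "w \<bullet> ((transpose LX ** centering ** LX) *v w) \<ge> 0" using centering_psd by simp
    then show ?thesis
      by (simp add: matrix_vector_mult_add_rdistrib scaleR_matrix_vector_assoc[symmetric] inner_add_right)
  qed
  interpret g: gep ?Am ?Bm U tau gam
    using symA symB posB assms(3) eig UBU top by unfold_locales blast+
  have P: "pinv LX ** LX = mat 1" by (rule pinv_left) (rule assms(5))
  have W0: "transpose U ** pinv LX ** LX = transpose U" using P by (simp add: matrix_mul_assoc[symmetric])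
  have obj: "fair_objective lam (gram k xs xs) (gram k xs xcs) LY LS Th = 1 / (real CARD('n))^2 *
     (\<Sum>j\<in>UNIV. row j (Th ** LX) \<bullet> (?Am *v row j (Th ** LX)))" for Th :: "real^'n^'r"
    by (rule red_obj[OF assms(4) assms(6) assms(7) assms(9)])
  have feas: "fair_feasible gam (gram k xs xs) Th \<longleftrightarrow> (Th ** LX) ** ?Bm ** transpose (Th ** LX) = mat 1"
    for Th :: "real^'n^'r"
    unfolding fair_feasible_def red_feas[OF assms(4)] ..
  show ?thesis unfolding fair_optimizer_def
  proof (intro conjI allI impI)
    show "fair_feasible gam (gram k xs xs) (transpose U ** pinv LX)"
      unfolding feas W0 using UBU by simp
  next
    fix Th :: "real^'n^'r"
    assume "fair_feasible gam (gram k xs xs) Th"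
    then have "transpose (transpose (Th ** LX)) ** ?Bm ** transpose (Th ** LX) = mat 1"
      unfolding feas by simp
    from g.kyfan[OF this]
    have "(\<Sum>j\<in>UNIV. row j (Th ** LX) \<bullet> (?Am *v row j (Th ** LX)))
          \<le> (\<Sum>j\<in>UNIV. row j (transpose U ** pinv LX ** LX) \<bullet> (?Am *v row j (transpose U ** pinv LX ** LX)))"
      unfolding W0 by simp
    then show "fair_objective lam (gram k xs xs) (gram k xs xcs) LY LS Th
        \<le> fair_objective lam (gram k xs xs) (gram k xs xcs) LY LS (transpose U ** pinv LX)"
      unfolding obj by (rule mult_left_mono) simp
  qed
qed


end
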